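(* For all positive integers $m,n$, $\theta(K_{m,n}\times K_2)=\theta(K_{m,n})$.
   Context: The thickness $\theta(G)$ of a graph $G$ is the minimum number of planar subgraphs whose union is $G$. The Kronecker product $G\times H$ of graphs $G$ and $H$ is the graph with vertex set $V(G)\times V(H)$ in which $(g,h)$ and $(g',h')$ are adjacent if and only if $gg'\in E(G)$ and $hh'\in E(H)$. $K_{a,b}$ denotes the complete bipartite graph with parts of sizes $a$ and $b$. *)

theory Defs
  imports "HOL-Analysis.Analysis"
begin

definition simple_graph :: "'a set \<Rightarrow> 'a set set \<Rightarrow> bool" where
  "simple_graph V E \<longleftrightarrow> finite V \<and> (\<forall>e\<in>E. e \<subseteq> V \<and> card e = 2)"

definition planar :: "'a set \<Rightarrow> 'a set set \<Rightarrow> bool" where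
  "planar V E \<longleftrightarrow>
     (\<exists>(p :: 'a \<Rightarrow> complex) (c :: 'a set \<Rightarrow> real \<Rightarrow> complex).
        inj_on p V \<and>
        (\<forall>e\<in>E. arc (c e) \<and> {pathstart (c e), pathfinish (c e)} = p ` e) \<and>
        (\<forall>e\<in>E. \<forall>v\<in>V - e. p v \<notin> path_image (c e)) \<and>
        (\<forall>e\<in>E. \<forall>e'\<in>E. e \<noteq> e' \<longrightarrow>
            path_image (c e) \<inter> path_image (c e') \<subseteq> p ` (e \<inter> e')))"

text \<open>Thickness: the minimum number of planar subgraphs whose union is the graph.
  Subgraphs are taken spanning (vertex set V), which is harmless since isolated
  vertices do not affect planarity.\<close>

definition thickness :: "'a set \<Rightarrow> 'a set set \<Rightarrow> nat" where
  "thickness V E = (LEAST k. \<exists>Es :: nat \<Rightarrow> 'a set set.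
       (\<forall>i<k. Es i \<subseteq> E \<and> planar V (Es i)) \<and> (\<Union>i<k. Es i) = E)"

definition kron_verts :: "'a set \<Rightarrow> 'b set \<Rightarrow> ('a \<times> 'b) set" where
  "kron_verts V1 V2 = V1 \<times> V2"

definition kron_edges :: "'a set set \<Rightarrow> 'b set set \<Rightarrow> ('a \<times> 'b) set set" where
  "kron_edges E1 E2 = {{(g, h), (g', h')} | g g' h h'. {g, g'} \<in> E1 \<and> {h, h'} \<in> E2}"

definition Kbip_verts :: "nat \<Rightarrow> nat \<Rightarrow> (nat + nat) set" where
  "Kbip_verts m n = Inl ` {..<m} \<union> Inr ` {..<n}"

definition Kbip_edges :: "nat \<Rightarrow> nat \<Rightarrow> (nat + nat) set set" where
  "Kbip_edges m n = {{Inl i, Inr j} | i j. i < m \<and> j < n}"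

definition K2_verts :: "nat set" where "K2_verts = {0, 1}"
definition K2_edges :: "nat set set" where "K2_edges = {{0, 1}}"

end

theory Submission imports Defs begin


lemma planar_inj:
  assumes inj: "inj_on f V" and fV: "f ` V \<subseteq> V'" and pl: "planar V' E'"
    and ed: "\<And>e. e \<in> E \<Longrightarrow> e \<subseteq> V \<and> f ` e \<in> E'"
  shows "planar V E"
proof -
  obtain p :: "_ \<Rightarrow> complex" and c :: "_ \<Rightarrow> real \<Rightarrow> complex" where inj': "inj_on p V'"
    and a: "\<forall>e\<in>E'. arc (c e) \<and> {pathstart (c e), pathfinish (c e)} = p ` e"
    and b: "\<forall>e\<in>E'. \<forall>v\<in>V' - e. p v \<notin> path_image (c e)"
    and d: "\<forall>e\<in>E'. \<forall>e'\<in>E'. e \<noteq> e' \<longrightarrow> path_image (c e) \<inter> path_image (c e') \<subseteq> p ` (e \<inter> e')"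
    using pl unfolding planar_def by (elim exE conjE) (rule that)
  show ?thesis unfolding planar_def
  proof (intro exI[of _ "p \<circ> f"] exI[of _ "\<lambda>e. c (f ` e)"] conjI ballI impI)
    show "inj_on (p \<circ> f) V" using inj inj' fV by (meson comp_inj_on inj_on_subset)
  next
    fix e assume "e \<in> E"
    then show "arc (c (f ` e))" "{pathstart (c (f ` e)), pathfinish (c (f ` e))} = (p \<circ> f) ` e"
      using a ed by (auto simp: image_comp)
  next
    fix e v assume e: "e \<in> E" and v: "v \<in> V - e"
    have "f v \<in> V' - f ` e" using e v ed[OF e] inj fV
      by (auto simp: inj_on_def)
    then show "(p \<circ> f) v \<notin> path_image (c (f ` e))" using b ed[OF e] by auto
  next
    fix e e' assume e: "e \<in> E" and e': "e' \<in> E" and ne: "e \<noteq> e'"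
    have "f ` e \<noteq> f ` e'" using ed[OF e] ed[OF e'] ne inj
      by (metis inj_on_image_eq_iff)
    then have "path_image (c (f ` e)) \<inter> path_image (c (f ` e')) \<subseteq> p ` (f ` e \<inter> f ` e')"
      using d ed[OF e] ed[OF e'] by blast
    also have "f ` e \<inter> f ` e' = f ` (e \<inter> e')"
      using ed[OF e] ed[OF e'] inj by (simp add: inj_on_image_Int)
    finally show "path_image (c (f ` e)) \<inter> path_image (c (f ` e')) \<subseteq> (p \<circ> f) ` (e \<inter> e')"
      by (simp add: image_comp)
  qed
qed

lemma planar_iso:
  assumes inj: "inj_on f V" and pl: "planar V E" and ed: "\<And>e. e \<in> E \<Longrightarrow> e \<subseteq> V"
  shows "planar (f ` V) ((\<lambda>e. f ` e) ` E)"
proof (rule planar_inj[OF _ _ pl])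
  show "inj_on (inv_into V f) (f ` V)" by (simp add: inj_on_inv_into)
  show "inv_into V f ` f ` V \<subseteq> V" using inj by simp
  fix e assume "e \<in> (\<lambda>e. f ` e) ` E"
  then obtain e0 where "e0 \<in> E" "e = f ` e0" by blast
  then show "e \<subseteq> f ` V \<and> inv_into V f ` e \<in> E"
    using ed inj by (auto simp: image_inv_into_cancel)
qed

lemma planar_union:
  assumes AB: "A \<inter> B = {}" and fA: "finite A" and fB: "finite B"
    and fE1: "finite E1" and fE2: "finite E2"
    and E1A: "\<And>e. e \<in> E1 \<Longrightarrow> e \<subseteq> A" and E2B: "\<And>e. e \<in> E2 \<Longrightarrow> e \<subseteq> B"
    and pA: "planar A E1" and pB: "planar B E2"
  shows "planar (A \<union> B) (E1 \<union> E2)"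
proof -
  obtain p1 :: "_ \<Rightarrow> complex" and c1 :: "_ \<Rightarrow> real \<Rightarrow> complex" where i1: "inj_on p1 A"
    and a1: "\<forall>e\<in>E1. arc (c1 e) \<and> {pathstart (c1 e), pathfinish (c1 e)} = p1 ` e"
    and b1: "\<forall>e\<in>E1. \<forall>v\<in>A - e. p1 v \<notin> path_image (c1 e)"
    and d1: "\<forall>e\<in>E1. \<forall>e'\<in>E1. e \<noteq> e' \<longrightarrow> path_image (c1 e) \<inter> path_image (c1 e') \<subseteq> p1 ` (e \<inter> e')"
    using pA unfolding planar_def by (elim exE conjE) (rule that)
  obtain p2 :: "_ \<Rightarrow> complex" and c2 :: "_ \<Rightarrow> real \<Rightarrow> complex" where i2: "inj_on p2 B"
    and a2: "\<forall>e\<in>E2. arc (c2 e) \<and> {pathstart (c2 e), pathfinish (c2 e)} = p2 ` e"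
    and b2: "\<forall>e\<in>E2. \<forall>v\<in>B - e. p2 v \<notin> path_image (c2 e)"
    and d2: "\<forall>e\<in>E2. \<forall>e'\<in>E2. e \<noteq> e' \<longrightarrow> path_image (c2 e) \<inter> path_image (c2 e') \<subseteq> p2 ` (e \<inter> e')"
    using pB unfolding planar_def by (elim exE conjE) (rule that)
  define S1 where "S1 = p1 ` A \<union> (\<Union>e\<in>E1. path_image (c1 e))"
  define S2 where "S2 = p2 ` B \<union> (\<Union>e\<in>E2. path_image (c2 e))"
  have "compact S1" unfolding S1_def
  proof (rule compact_Un)
    show "compact (p1`A)" using fA by (simp add: finite_imp_compact)
    show "compact (\<Union>e\<in>E1. path_image (c1 e))" using fE1 a1
      by (intro compact_UN) (auto intro: compact_path_image arc_imp_path)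
  qed
  then obtain r1 where r1: "r1 > 0" "\<And>x. x \<in> S1 \<Longrightarrow> norm x \<le> r1"
    using compact_imp_bounded[of S1] unfolding bounded_pos by blast
  have "compact S2" unfolding S2_def
  proof (rule compact_Un)
    show "compact (p2`B)" using fB by (simp add: finite_imp_compact)
    show "compact (\<Union>e\<in>E2. path_image (c2 e))" using fE2 a2
      by (intro compact_UN) (auto intro: compact_path_image arc_imp_path)
  qed
  then obtain r2 where r2: "r2 > 0" "\<And>x. x \<in> S2 \<Longrightarrow> norm x \<le> r2"
    using compact_imp_bounded[of S2] unfolding bounded_pos by blast
  define t where "t = complex_of_real (r1 + r2 + 1)"
  have disj: "x \<noteq> t + y" if "x \<in> S1" "y \<in> S2" for x y
  proof
    assume eq: "x = t + y"
    have "norm t = r1 + r2 + 1" unfolding t_def using r1 r2 by (simp only: norm_of_real)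
    moreover have "norm t \<le> norm (t + y) + norm y" by (metis add_diff_cancel_right' norm_triangle_ineq4)
    moreover have "norm (t + y) \<le> r1" using r1(2)[OF that(1)] eq by simp
    ultimately show False using r2(2)[OF that(2)] by linarith
  qed
  define p where "p v = (if v \<in> A then p1 v else t + p2 v)" for v
  define c where "c e = (if e \<in> E1 then c1 e else (\<lambda>x. t + x) \<circ> c2 e)" for e
  have pA': "v \<in> A \<Longrightarrow> p v = p1 v" for v by (simp add: p_def)
  have pB': "v \<in> B \<Longrightarrow> p v = t + p2 v" for v using AB by (auto simp: p_def)
  have pimA: "e \<subseteq> A \<Longrightarrow> p ` e = p1 ` e" for e using pA' by (metis image_cong subset_eq)
  have pimB: "e \<subseteq> B \<Longrightarrow> p ` e = (\<lambda>x. t + x) ` p2 ` e" for e using pB' by force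
  have E12: "e \<in> E1 \<Longrightarrow> e \<notin> E2" for e
  proof
    assume "e \<in> E1" "e \<in> E2"
    then have "e = {}" using E1A E2B AB by blast
    with a1 \<open>e \<in> E1\<close> show False by (auto simp: arc_def)
  qed
  have cE1: "e \<in> E1 \<Longrightarrow> c e = c1 e" for e by (simp add: c_def)
  have cE2: "e \<in> E2 \<Longrightarrow> c e = (\<lambda>x. t + x) \<circ> c2 e" for e using E12 by (auto simp: c_def)
  have piE1: "e \<in> E1 \<Longrightarrow> path_image (c e) \<subseteq> S1" for e using cE1 S1_def by auto
  have piE2: "e \<in> E2 \<Longrightarrow> path_image (c e) \<subseteq> (\<lambda>x. t + x) ` S2" for e
    using cE2 S2_def by (auto simp: path_image_translation)
  have pS1: "v \<in> A \<Longrightarrow> p v \<in> S1" for v using pA' S1_def by auto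
  have pS2: "v \<in> B \<Longrightarrow> p v \<in> (\<lambda>x. t + x) ` S2" for v using pB' S2_def by auto
  have D: "X \<subseteq> S1 \<Longrightarrow> Y \<subseteq> (\<lambda>x. t + x) ` S2 \<Longrightarrow> X \<inter> Y = {}" for X Y using disj by fastforce
  show ?thesis unfolding planar_def
  proof (intro exI[of _ p] exI[of _ c] conjI ballI impI)
    show "inj_on p (A \<union> B)"
    proof (rule inj_onI)
      fix x y assume x: "x \<in> A \<union> B" and y: "y \<in> A \<union> B" and eq: "p x = p y"
      show "x = y"
      proof (cases "x \<in> A")
        case True
        show ?thesis
        proof (cases "y \<in> A")
          case True then show ?thesis using \<open>x \<in> A\<close> eq i1 pA' by (metis inj_onD)
        next
          case False then have "y \<in> B" using y by auto
          then show ?thesis using D[of "{p x}" "{p y}"] pS1[OF \<open>x\<in>A\<close>] pS2 eq by auto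
        qed
      next
        case False then have xB: "x \<in> B" using x by auto
        show ?thesis
        proof (cases "y \<in> A")
          case True
          then show ?thesis using D[of "{p y}" "{p x}"] pS1 pS2[OF xB] eq by auto
        next
          case False then have "y \<in> B" using y by auto
          then show ?thesis using xB eq i2 pB' by (metis add_left_cancel inj_onD)
        qed
      qed
    qed
  next
    fix e assume e: "e \<in> E1 \<union> E2"
    show "arc (c e)" using e a1 a2 cE1 cE2 by (auto simp: arc_translation_eq)
    show "{pathstart (c e), pathfinish (c e)} = p ` e"
    proof (cases "e \<in> E1")
      case True then show ?thesis using a1 cE1 pimA E1A by auto
    next
      case False then have "e \<in> E2" using e by auto
      then have "{pathstart (c e), pathfinish (c e)} = (\<lambda>x. t + x) ` {pathstart (c2 e), pathfinish (c2 e)}"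
        using cE2 by (simp add: pathstart_translation pathfinish_translation)
      also have "\<dots> = (\<lambda>x. t + x) ` p2 ` e" using a2 \<open>e \<in> E2\<close> by simp
      also have "\<dots> = p ` e" using pimB E2B \<open>e \<in> E2\<close> by simp
      finally show ?thesis .
    qed
  next
    fix e v assume e: "e \<in> E1 \<union> E2" and v: "v \<in> A \<union> B - e"
    show "p v \<notin> path_image (c e)"
    proof (cases "e \<in> E1")
      case True
      show ?thesis
      proof (cases "v \<in> A")
        case True then show ?thesis using b1 \<open>e \<in> E1\<close> v cE1 pA' by auto
      next
        case False then have "v \<in> B" using v by auto
        then show ?thesis using D[of "path_image (c e)" "{p v}"] piE1[OF \<open>e\<in>E1\<close>] pS2 by auto
      qed
    next
      case False then have eE2: "e \<in> E2" using e by auto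
      show ?thesis
      proof (cases "v \<in> A")
        case True then show ?thesis using D[of "{p v}" "path_image (c e)"] piE2[OF eE2] pS1 by auto
      next
        case False then have "v \<in> B" using v by auto
        then show ?thesis using b2 eE2 v cE2 pB' by (auto simp: path_image_translation)
      qed
    qed
  next
    fix e e' assume e: "e \<in> E1 \<union> E2" and e': "e' \<in> E1 \<union> E2" and ne: "e \<noteq> e'"
    show "path_image (c e) \<inter> path_image (c e') \<subseteq> p ` (e \<inter> e')"
    proof (cases "e \<in> E1")
      case True
      show ?thesis
      proof (cases "e' \<in> E1")
        case True
        have "path_image (c1 e) \<inter> path_image (c1 e') \<subseteq> p1 ` (e \<inter> e')" using \<open>e \<in> E1\<close> True d1 ne by blast
        moreover have "p ` (e \<inter> e') = p1 ` (e \<inter> e')" using pimA E1A \<open>e \<in> E1\<close> by blast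
        ultimately show ?thesis using cE1 \<open>e \<in> E1\<close> True by simp
      next
        case False then have "e' \<in> E2" using e' by auto
        then show ?thesis using D[OF piE1[OF \<open>e\<in>E1\<close>] piE2] by blast
      qed
    next
      case False then have eE2: "e \<in> E2" using e by auto
      show ?thesis
      proof (cases "e' \<in> E1")
        case True then show ?thesis using D[OF piE1[OF True] piE2[OF eE2]] by blast
      next
        case False then have e'E2: "e' \<in> E2" using e' by auto
        have "path_image (c e) \<inter> path_image (c e') = (\<lambda>x. t + x) ` (path_image (c2 e) \<inter> path_image (c2 e'))"
          using cE2[OF eE2] cE2[OF e'E2] by (simp add: path_image_translation image_Int inj_on_def)
        also have "\<dots> \<subseteq> (\<lambda>x. t + x) ` p2 ` (e \<inter> e')" using d2 eE2 e'E2 ne by blast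
        also have "\<dots> = p ` (e \<inter> e')" using pimB[of "e \<inter> e'"] E2B eE2 by auto
        finally show ?thesis .
      qed
    qed
  qed
qed



definition ph0 :: "nat + nat \<Rightarrow> (nat + nat) \<times> nat" where
  "ph0 v = (v, case v of Inl _ \<Rightarrow> 0 | Inr _ \<Rightarrow> 1)"
definition ph1 :: "nat + nat \<Rightarrow> (nat + nat) \<times> nat" where
  "ph1 v = (v, case v of Inl _ \<Rightarrow> 1 | Inr _ \<Rightarrow> 0)"

lemma inj_ph0: "inj ph0" by (auto simp: inj_def ph0_def)
lemma inj_ph1: "inj ph1" by (auto simp: inj_def ph1_def)

lemma ph_edge: "ph0 ` {Inl i, Inr j} = {(Inl i, 0), (Inr j, 1)}"
  "ph1 ` {Inl i, Inr j} = {(Inl i, 1), (Inr j, 0)}"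
  by (auto simp: ph0_def ph1_def)

lemma kron_eq: "kron_edges (Kbip_edges m n) K2_edges =
   (\<lambda>e. ph0 ` e) ` Kbip_edges m n \<union> (\<lambda>e. ph1 ` e) ` Kbip_edges m n"
proof
  show "kron_edges (Kbip_edges m n) K2_edges \<subseteq> (\<lambda>e. ph0 ` e) ` Kbip_edges m n \<union> (\<lambda>e. ph1 ` e) ` Kbip_edges m n"
  proof
    fix x assume "x \<in> kron_edges (Kbip_edges m n) K2_edges"
    then obtain g g' h h' i j where x: "x = {(g, h), (g', h')}" and ij: "i < m" "j < n"
      and gg: "{g, g'} = {Inl i, Inr j}" and hh: "{h, h'} = {0, 1}"
      unfolding kron_edges_def Kbip_edges_def K2_edges_def by blast
    have e: "{Inl i, Inr j} \<in> Kbip_edges m n" using ij unfolding Kbip_edges_def by blast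
    from gg hh have "x = {(Inl i, 0), (Inr j, 1)} \<or> x = {(Inl i, 1), (Inr j, 0)}"
      unfolding x doubleton_eq_iff by auto
    then show "x \<in> (\<lambda>e. ph0 ` e) ` Kbip_edges m n \<union> (\<lambda>e. ph1 ` e) ` Kbip_edges m n"
      using e ph_edge by (metis UnI1 UnI2 image_eqI)
  qed
next
  show "(\<lambda>e. ph0 ` e) ` Kbip_edges m n \<union> (\<lambda>e. ph1 ` e) ` Kbip_edges m n \<subseteq> kron_edges (Kbip_edges m n) K2_edges"
  proof
    fix x assume "x \<in> (\<lambda>e. ph0 ` e) ` Kbip_edges m n \<union> (\<lambda>e. ph1 ` e) ` Kbip_edges m n"
    then obtain i j where ij: "i < m" "j < n" and
      x: "x = {(Inl i, 0), (Inr j, 1)} \<or> x = {(Inl i, 1), (Inr j, 0)}"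
      unfolding Kbip_edges_def using ph_edge by auto
    have e: "{Inl i, Inr j} \<in> Kbip_edges m n" using ij unfolding Kbip_edges_def by blast
    have k1: "{0::nat, 1} \<in> K2_edges" "{1::nat, 0} \<in> K2_edges" by (auto simp: K2_edges_def insert_commute)
    show "x \<in> kron_edges (Kbip_edges m n) K2_edges"
      using x
    proof
      assume "x = {(Inl i, 0), (Inr j, 1)}"
      then show ?thesis unfolding kron_edges_def using e k1 by blast
    next
      assume "x = {(Inl i, 1), (Inr j, 0)}"
      then show ?thesis unfolding kron_edges_def using e k1 by blast
    qed
  qed
qed

lemma kron_v: "kron_verts (Kbip_verts m n) K2_verts = ph0 ` Kbip_verts m n \<union> ph1 ` Kbip_verts m n"
  unfolding kron_verts_def K2_verts_def Kbip_verts_def ph0_def ph1_def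
  by (auto simp: image_iff)

lemma disj_v: "ph0 ` X \<inter> ph1 ` Y = {}"
  unfolding ph0_def ph1_def by (auto split: sum.splits)

lemma fin_v: "finite (Kbip_verts m n)" by (simp add: Kbip_verts_def)
lemma fin_e: "finite (Kbip_edges m n)"
proof -
  have "Kbip_edges m n = (\<lambda>(i,j). {Inl i, Inr j}) ` ({..<m} \<times> {..<n})"
    unfolding Kbip_edges_def by auto
  then show ?thesis by simp
qed
lemma sub_e: "e \<in> Kbip_edges m n \<Longrightarrow> e \<subseteq> Kbip_verts m n"
  unfolding Kbip_edges_def Kbip_verts_def by auto

theorem corollary3p7:
  fixes m n :: nat
  assumes "0 < m" and "0 < n"
  shows "thickness (kron_verts (Kbip_verts m n) K2_verts)
                   (kron_edges (Kbip_edges m n) K2_edges)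
         = thickness (Kbip_verts m n) (Kbip_edges m n)"
proof -
  define VG where "VG = Kbip_verts m n"
  define EG where "EG = Kbip_edges m n"
  define VH where "VH = kron_verts (Kbip_verts m n) K2_verts"
  define EH where "EH = kron_edges (Kbip_edges m n) K2_edges"
  have EH: "EH = (\<lambda>e. ph0 ` e) ` EG \<union> (\<lambda>e. ph1 ` e) ` EG" unfolding EH_def EG_def by (rule kron_eq)
  have VH: "VH = ph0 ` VG \<union> ph1 ` VG" unfolding VH_def VG_def by (rule kron_v)
  have fV: "finite VG" and fE: "finite EG" unfolding VG_def EG_def by (simp_all add: fin_v fin_e)
  have sE: "\<And>e. e \<in> EG \<Longrightarrow> e \<subseteq> VG" unfolding VG_def EG_def by (rule sub_e)
  have eq: "(\<exists>Es :: nat \<Rightarrow> _ set set. (\<forall>i<k. Es i \<subseteq> EH \<and> planar VH (Es i)) \<and> (\<Union>i<k. Es i) = EH)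
        \<longleftrightarrow> (\<exists>Es :: nat \<Rightarrow> _ set set. (\<forall>i<k. Es i \<subseteq> EG \<and> planar VG (Es i)) \<and> (\<Union>i<k. Es i) = EG)" for k
  proof
    assume "\<exists>Es :: nat \<Rightarrow> _ set set. (\<forall>i<k. Es i \<subseteq> EH \<and> planar VH (Es i)) \<and> (\<Union>i<k. Es i) = EH"
    then obtain Es where Es: "\<forall>i<k. Es i \<subseteq> EH \<and> planar VH (Es i)" "(\<Union>i<k. Es i) = EH" by blast
    define Fs where "Fs i = {e \<in> EG. ph0 ` e \<in> Es i}" for i
    show "\<exists>Es :: nat \<Rightarrow> _ set set. (\<forall>i<k. Es i \<subseteq> EG \<and> planar VG (Es i)) \<and> (\<Union>i<k. Es i) = EG"
    proof (intro exI[of _ Fs] conjI allI impI)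
      fix i assume i: "i < k"
      show "Fs i \<subseteq> EG" by (auto simp: Fs_def)
      show "planar VG (Fs i)"
      proof (rule planar_inj[of ph0 VG VH "Es i"])
        show "inj_on ph0 VG" by (meson inj_ph0 inj_on_subset subset_UNIV)
        show "ph0 ` VG \<subseteq> VH" using VH by blast
        show "planar VH (Es i)" using Es i by blast
        fix e assume "e \<in> Fs i" then show "e \<subseteq> VG \<and> ph0 ` e \<in> Es i" using sE by (auto simp: Fs_def)
      qed
    next
      show "(\<Union>i<k. Fs i) = EG"
      proof
        show "(\<Union>i<k. Fs i) \<subseteq> EG" by (auto simp: Fs_def)
        show "EG \<subseteq> (\<Union>i<k. Fs i)"
        proof
          fix e assume e: "e \<in> EG"
          then have "ph0 ` e \<in> EH" using EH by blast
          then obtain i where "i < k" "ph0 ` e \<in> Es i" using Es(2) by blast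
          then show "e \<in> (\<Union>i<k. Fs i)" using e by (auto simp: Fs_def)
        qed
      qed
    qed
  next
    assume "\<exists>Es :: nat \<Rightarrow> _ set set. (\<forall>i<k. Es i \<subseteq> EG \<and> planar VG (Es i)) \<and> (\<Union>i<k. Es i) = EG"
    then obtain Fs where Fs: "\<forall>i<k. Fs i \<subseteq> EG \<and> planar VG (Fs i)" "(\<Union>i<k. Fs i) = EG" by blast
    define Es where "Es i = (\<lambda>e. ph0 ` e) ` Fs i \<union> (\<lambda>e. ph1 ` e) ` Fs i" for i
    show "\<exists>Es :: nat \<Rightarrow> _ set set. (\<forall>i<k. Es i \<subseteq> EH \<and> planar VH (Es i)) \<and> (\<Union>i<k. Es i) = EH"
    proof (intro exI[of _ Es] conjI allI impI)
      fix i assume i: "i < k"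
      have sub: "Fs i \<subseteq> EG" using Fs i by blast
      then show "Es i \<subseteq> EH" unfolding Es_def EH by blast
      have fF: "finite (Fs i)" using sub fE finite_subset by blast
      have pl: "planar VG (Fs i)" using Fs i by blast
      show "planar VH (Es i)" unfolding VH Es_def
      proof (rule planar_union)
        show "ph0 ` VG \<inter> ph1 ` VG = {}" by (rule disj_v)
        show "finite (ph0 ` VG)" "finite (ph1 ` VG)" using fV by simp_all
        show "finite ((\<lambda>e. ph0 ` e) ` Fs i)" "finite ((\<lambda>e. ph1 ` e) ` Fs i)" using fF by simp_all
        show "\<And>e. e \<in> (\<lambda>e. ph0 ` e) ` Fs i \<Longrightarrow> e \<subseteq> ph0 ` VG" using sub sE by blast
        show "\<And>e. e \<in> (\<lambda>e. ph1 ` e) ` Fs i \<Longrightarrow> e \<subseteq> ph1 ` VG" using sub sE by blast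
        show "planar (ph0 ` VG) ((\<lambda>e. ph0 ` e) ` Fs i)"
          by (rule planar_iso[OF _ pl]) (use inj_ph0 sub sE in \<open>auto intro: inj_on_subset[OF _ subset_UNIV]\<close>)
        show "planar (ph1 ` VG) ((\<lambda>e. ph1 ` e) ` Fs i)"
          by (rule planar_iso[OF _ pl]) (use inj_ph1 sub sE in \<open>auto intro: inj_on_subset[OF _ subset_UNIV]\<close>)
      qed
    next
      show "(\<Union>i<k. Es i) = EH" unfolding Es_def EH using Fs(2) by blast
    qed
  qed
  show ?thesis
    unfolding thickness_def
    using eq unfolding VG_def EG_def VH_def EH_def by simp
qed

end
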